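(* Let $v\in\mathbb R^w$ and $u\in\{-1,1\}^w$ be such that $\|v-u\|_1\le(1-\kappa)w$, where $\kappa>0$ is a positive constant. Then with probability $1-\exp(-\Omega(w))$, $$\mathrm{ham}(\mathbf{Round}(v),u)\le\frac12\left(1-\frac\kappa2\right)w.$$
   Context: $\mathbf{Round}:\mathbb R\to\{-1,1\}$ is the randomized function with: for $t\in[-1,1]$, $\mathbf{Round}(t)=1$ with probability $\frac{1+t}2$ and $-1$ with probability $\frac{1-t}2$; for $|t|>1$, $\mathbf{Round}(t)=\mathrm{sign}(t)$. For $v\in\mathbb R^w$, $\mathbf{Round}(v)=(\mathbf{Round}(v_1),\dots,\mathbf{Round}(v_w))$ with independent randomness per coordinate. $\mathrm{ham}(x,y)$ is the number of coordinates where $x,y\in\{-1,1\}^w$ differ, and $\|\cdot\|_1$ is the $\ell_1$ norm. *)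

theory Defs
  imports "HOL-Probability.Probability"
begin

definition Round1 :: "real \<Rightarrow> real pmf" where
  "Round1 t = (if \<bar>t\<bar> \<le> 1
      then map_pmf (\<lambda>b. if b then 1 else -1) (bernoulli_pmf ((1 + t) / 2))
      else return_pmf (sgn t))"

fun Round :: "real list \<Rightarrow> real list pmf" where
  "Round [] = return_pmf []"
| "Round (t # ts) = bind_pmf (Round1 t) (\<lambda>a. map_pmf (\<lambda>r. a # r) (Round ts))"

definition ham :: "real list \<Rightarrow> real list \<Rightarrow> nat" where
  "ham x y = card {i. i < length x \<and> i < length y \<and> x ! i \<noteq> y ! i}"

definition l1_dist :: "real list \<Rightarrow> real list \<Rightarrow> real" where
  "l1_dist x y = (\<Sum>i<min (length x) (length y). \<bar>x ! i - y ! i\<bar>)"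

end

theory Submission
  imports Defs
begin

lemma ham_Cons: "ham (b#r) (a#us) = (if b = a then 0 else 1) + ham r us"
proof -
  have "{i. i < length (b#r) \<and> i < length (a#us) \<and> (b#r) ! i \<noteq> (a#us) ! i}
     = (if b = a then {} else {0}) \<union> Suc ` {i. i < length r \<and> i < length us \<and> r ! i \<noteq> us ! i}"
  proof (intro set_eqI iffI)
    fix i assume "i \<in> {i. i < length (b#r) \<and> i < length (a#us) \<and> (b#r) ! i \<noteq> (a#us) ! i}"
    then show "i \<in> (if b = a then {} else {0}) \<union> Suc ` {i. i < length r \<and> i < length us \<and> r ! i \<noteq> us ! i}"
      by (cases i) auto
  qed (auto split: if_splits)
  moreover have "finite {i. i < length r \<and> i < length us \<and> r ! i \<noteq> us ! i}" by simp
  ultimately show ?thesis unfolding ham_def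
    by (cases "b = a") (auto simp: card_image card_insert_if)
qed

lemma ham_le: "ham x u \<le> length u"
  unfolding ham_def by (rule order_trans[OF card_mono[of "{..<length u}"]]) auto

lemma l1_Cons: "l1_dist (t#ts) (a#us) = \<bar>t - a\<bar> + l1_dist ts us"
  unfolding l1_dist_def by (simp add: min_Suc_Suc sum.lessThan_Suc_shift del: sum.lessThan_Suc)

lemma l1_nonneg: "l1_dist x y \<ge> 0"
  unfolding l1_dist_def by (simp add: sum_nonneg)

lemma Round1_bound:
  assumes a: "a \<in> {-1, 1}" and lm: "\<mu> \<ge> 0"
  shows "(\<integral>\<^sup>+ b. ennreal (exp (\<mu> * (if b = a then 0 else 1))) \<partial>Round1 t)
     \<le> ennreal (exp ((exp \<mu> - 1) * \<bar>t - a\<bar> / 2))"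
proof (cases "\<bar>t\<bar> \<le> 1")
  case True
  have p: "0 \<le> (1 + t) / 2" "(1 + t) / 2 \<le> 1" using True by auto
  have "(\<integral>\<^sup>+ b. ennreal (exp (\<mu> * (if b = a then 0 else 1))) \<partial>Round1 t)
     = ennreal (exp (\<mu> * (if 1 = a then 0 else 1))) * ennreal ((1 + t) / 2)
       + ennreal (exp (\<mu> * (if -1 = a then 0 else 1))) * ennreal (1 - (1 + t) / 2)"
    using True p by (simp add: Round1_def)
  also have "\<dots> = ennreal (exp (\<mu> * (if 1 = a then 0 else 1)) * ((1 + t) / 2)
       + exp (\<mu> * (if -1 = a then 0 else 1)) * (1 - (1 + t) / 2))"
  proof -
    have e: "\<And>x y. 0 \<le> x \<Longrightarrow> 0 \<le> y \<Longrightarrow> ennreal x * ennreal y = ennreal (x*y)"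
      by (simp add: ennreal_mult)
    have "ennreal (exp (\<mu> * (if 1 = a then 0 else 1))) * ennreal ((1 + t) / 2)
       + ennreal (exp (\<mu> * (if -1 = a then 0 else 1))) * ennreal (1 - (1 + t) / 2)
       = ennreal (exp (\<mu> * (if 1 = a then 0 else 1)) * ((1 + t) / 2))
       + ennreal (exp (\<mu> * (if -1 = a then 0 else 1)) * (1 - (1 + t) / 2))"
      by (rule arg_cong2[where f="(+)"]; rule e; use p in simp)
    also have "\<dots> = ennreal (exp (\<mu> * (if 1 = a then 0 else 1)) * ((1 + t) / 2)
       + exp (\<mu> * (if -1 = a then 0 else 1)) * (1 - (1 + t) / 2))"
      by (rule ennreal_plus[symmetric]; use p in simp)
    finally show ?thesis .
  qed
  also have "exp (\<mu> * (if 1 = a then 0 else 1)) * ((1 + t) / 2)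
       + exp (\<mu> * (if -1 = a then 0 else 1)) * (1 - (1 + t) / 2) = 1 + (exp \<mu> - 1) * \<bar>t - a\<bar> / 2"
    using a True by (auto simp: field_simps abs_if)
  also have "\<dots> \<le> ennreal (exp ((exp \<mu> - 1) * \<bar>t - a\<bar> / 2))"
    by (rule ennreal_leI) (rule exp_ge_add_one_self)
  finally show ?thesis .
next
  case False
  have "(\<integral>\<^sup>+ b. ennreal (exp (\<mu> * (if b = a then 0 else 1))) \<partial>Round1 t)
     = ennreal (exp (\<mu> * (if sgn t = a then 0 else 1)))"
    using False by (simp add: Round1_def)
  also have "\<dots> \<le> ennreal (exp ((exp \<mu> - 1) * \<bar>t - a\<bar> / 2))"
  proof (rule ennreal_leI, cases "sgn t = a")
    case True
    have "0 \<le> (exp \<mu> - 1) * \<bar>t - a\<bar> / 2" using lm by simp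
    then show "exp (\<mu> * (if sgn t = a then 0 else 1)) \<le> exp ((exp \<mu> - 1) * \<bar>t - a\<bar> / 2)"
      using True by simp
  next
    case ne: False
    have "\<bar>t - a\<bar> \<ge> 2" using ne False a by (auto simp: sgn_if split: if_splits)
    moreover have "exp \<mu> - 1 \<ge> \<mu>" using exp_ge_add_one_self[of \<mu>] by linarith
    moreover have "exp \<mu> - 1 \<ge> 0" using lm by simp
    ultimately have "(exp \<mu> - 1) * 1 \<le> (exp \<mu> - 1) * (\<bar>t - a\<bar> / 2)"
      by (intro mult_left_mono) auto
    then have "\<mu> \<le> (exp \<mu> - 1) * \<bar>t - a\<bar> / 2"
      using \<open>\<mu> \<le> exp \<mu> - 1\<close> by simp
    then show "exp (\<mu> * (if sgn t = a then 0 else 1)) \<le> exp ((exp \<mu> - 1) * \<bar>t - a\<bar> / 2)"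
      using ne by simp
  qed
  finally show ?thesis .
qed

lemma real_if01: "real (if P then 0 else 1) = (if P then 0 else 1)" by simp

lemma mgf_bound:
  fixes \<mu> :: real
  assumes lm: "\<mu> \<ge> 0"
  shows "length u = length v \<Longrightarrow> set u \<subseteq> {-1, 1} \<Longrightarrow>
    (\<integral>\<^sup>+ x. ennreal (exp (\<mu> * real (ham x u))) \<partial>Round v) \<le> ennreal (exp ((exp \<mu> - 1) * l1_dist v u / 2))"
proof (induction v arbitrary: u)
  case Nil
  then show ?case by (simp add: ham_def l1_dist_def)
next
  case (Cons t ts)
  then obtain a us where u: "u = a # us" by (cases u) auto
  have a: "a \<in> {-1, 1}" and us: "length us = length ts" "set us \<subseteq> {-1, 1}" using Cons.prems u by auto
  have IH: "(\<integral>\<^sup>+ x. ennreal (exp (\<mu> * real (ham x us))) \<partial>Round ts) \<le> ennreal (exp ((exp \<mu> - 1) * l1_dist ts us / 2))"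
    using Cons.IH us by blast
  have "(\<integral>\<^sup>+ x. ennreal (exp (\<mu> * real (ham x u))) \<partial>Round (t # ts))
      = (\<integral>\<^sup>+ b. (\<integral>\<^sup>+ r. ennreal (exp (\<mu> * (if b = a then 0 else 1))) * ennreal (exp (\<mu> * real (ham r us))) \<partial>Round ts) \<partial>Round1 t)"
    by (simp add: u ham_Cons real_if01 distrib_left exp_add ennreal_mult')
  also have "\<dots> = (\<integral>\<^sup>+ b. ennreal (exp (\<mu> * (if b = a then 0 else 1))) * (\<integral>\<^sup>+ r. ennreal (exp (\<mu> * real (ham r us))) \<partial>Round ts) \<partial>Round1 t)"
    by (simp add: nn_integral_cmult)
  also have "\<dots> \<le> (\<integral>\<^sup>+ b. ennreal (exp (\<mu> * (if b = a then 0 else 1))) * ennreal (exp ((exp \<mu> - 1) * l1_dist ts us / 2)) \<partial>Round1 t)"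
    by (intro nn_integral_mono mult_left_mono IH) auto
  also have "\<dots> = (\<integral>\<^sup>+ b. ennreal (exp (\<mu> * (if b = a then 0 else 1))) \<partial>Round1 t) * ennreal (exp ((exp \<mu> - 1) * l1_dist ts us / 2))"
    by (simp add: nn_integral_multc)
  also have "\<dots> \<le> ennreal (exp ((exp \<mu> - 1) * \<bar>t - a\<bar> / 2)) * ennreal (exp ((exp \<mu> - 1) * l1_dist ts us / 2))"
    by (intro mult_right_mono Round1_bound a lm) auto
  also have "\<dots> = ennreal (exp ((exp \<mu> - 1) * l1_dist (t # ts) u / 2))"
    by (simp add: u l1_Cons ennreal_mult'[symmetric] exp_add[symmetric] field_simps)
  finally show ?case .
qed


lemma main_small:
  fixes \<kappa> :: real
  assumes k0: "\<kappa> > 0" and k1: "\<kappa> \<le> 1"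
    and len: "length u = length v" and su: "set u \<subseteq> {-1, 1}"
    and l1: "l1_dist v u \<le> (1 - \<kappa>) * real (length v)"
  shows "measure_pmf.prob (Round v) {x. real (ham x u) \<le> 1/2 * (1 - \<kappa>/2) * real (length v)}
           \<ge> 1 - exp (- (\<kappa>^2/32) * real (length v))"
proof -
  define w where "w = real (length v)"
  define \<mu> where "\<mu> = \<kappa> / 4"
  define T where "T = 1/2 * (1 - \<kappa>/2) * w"
  define A where "A = {x. \<not> real (ham x u) \<le> T}"
  have w0: "w \<ge> 0" unfolding w_def by simp
  have mu0: "\<mu> \<ge> 0" "\<mu> \<le> 1" using k0 k1 unfolding \<mu>_def by auto
  have E: "(\<integral>\<^sup>+ x. ennreal (exp (\<mu> * real (ham x u))) \<partial>Round v) \<le> ennreal (exp ((exp \<mu> - 1) * l1_dist v u / 2))"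
    using mgf_bound[OF mu0(1) len su] .
  have "emeasure (measure_pmf (Round v)) A = (\<integral>\<^sup>+ x. indicator A x \<partial>Round v)"
    by simp
  also have "\<dots> \<le> (\<integral>\<^sup>+ x. ennreal (exp (- \<mu> * T)) * ennreal (exp (\<mu> * real (ham x u))) \<partial>Round v)"
  proof (intro nn_integral_mono)
    fix x
    show "indicator A x \<le> ennreal (exp (- \<mu> * T)) * ennreal (exp (\<mu> * real (ham x u)))"
    proof (cases "x \<in> A")
      case True
      then have "T \<le> real (ham x u)" unfolding A_def by auto
      then have "\<mu> * T \<le> \<mu> * real (ham x u)" using mu0 by (intro mult_left_mono) auto
      then have "1 \<le> exp (- \<mu> * T + \<mu> * real (ham x u))" by simp
      then show ?thesis using True by (simp add: ennreal_mult'[symmetric] exp_add[symmetric])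
    qed simp
  qed
  also have "\<dots> = ennreal (exp (- \<mu> * T)) * (\<integral>\<^sup>+ x. ennreal (exp (\<mu> * real (ham x u))) \<partial>Round v)"
    by (simp add: nn_integral_cmult)
  also have "\<dots> \<le> ennreal (exp (- \<mu> * T)) * ennreal (exp ((exp \<mu> - 1) * l1_dist v u / 2))"
    by (intro mult_left_mono E) auto
  also have "\<dots> = ennreal (exp (- \<mu> * T) * exp ((exp \<mu> - 1) * l1_dist v u / 2))"
    by (rule ennreal_mult'[symmetric]) simp
  also have "\<dots> = ennreal (exp (- \<mu> * T + (exp \<mu> - 1) * l1_dist v u / 2))"
    by (simp only: exp_add)
  also have "\<dots> \<le> ennreal (exp (- (\<kappa>^2/32) * w))"
  proof (intro ennreal_leI exp_mono)
    have eb: "exp \<mu> - 1 \<le> \<mu> + \<mu>^2" using exp_bound[OF mu0] by simp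
    have e0: "exp \<mu> - 1 \<ge> 0" using mu0 by simp
    have "(exp \<mu> - 1) * l1_dist v u \<le> (exp \<mu> - 1) * ((1 - \<kappa>) * w)"
      using l1 e0 unfolding w_def by (intro mult_left_mono) auto
    also have "\<dots> \<le> (\<mu> + \<mu>^2) * ((1 - \<kappa>) * w)"
      using eb k1 w0 by (intro mult_right_mono) auto
    finally have b: "(exp \<mu> - 1) * l1_dist v u \<le> (\<mu> + \<mu>^2) * ((1 - \<kappa>) * w)" .
    have id: "- \<mu> * T + (\<mu> + \<mu>^2) * ((1 - \<kappa>) * w) / 2 = - (\<kappa>^2/32) * w - \<kappa>^3 * w / 32"
      unfolding \<mu>_def T_def by (simp add: field_simps power2_eq_square power3_eq_cube)
    have "\<kappa>^3 * w \<ge> 0" using k0 w0 by simp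
    then show "- \<mu> * T + (exp \<mu> - 1) * l1_dist v u / 2 \<le> - (\<kappa>^2/32) * w"
      using b id by linarith
  qed
  finally have "ennreal (measure_pmf.prob (Round v) A) \<le> ennreal (exp (- (\<kappa>^2/32) * w))"
    by (simp add: measure_pmf.emeasure_eq_measure)
  then have pA: "measure_pmf.prob (Round v) A \<le> exp (- (\<kappa>^2/32) * w)"
    by (simp add: ennreal_le_iff)
  have "measure_pmf.prob (Round v) {x. real (ham x u) \<le> T} = 1 - measure_pmf.prob (Round v) A"
    using measure_pmf.prob_compl[of A "Round v"] unfolding A_def
    by (simp add: set_diff_eq)
  then show ?thesis using pA unfolding T_def w_def by simp
qed

theorem lemma8p3:
  fixes \<kappa> :: real
  assumes "\<kappa> > 0"
  shows "\<exists>c > 0. \<exists>N::nat. \<forall>w \<ge> N. \<forall>v u :: real list.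
           length v = w \<longrightarrow> length u = w \<longrightarrow> set u \<subseteq> {-1, 1} \<longrightarrow>
           l1_dist v u \<le> (1 - \<kappa>) * real w \<longrightarrow>
           measure_pmf.prob (Round v)
             {x. real (ham x u) \<le> 1/2 * (1 - \<kappa>/2) * real w} \<ge> 1 - exp (- c * real w)"
proof (cases "\<kappa> \<le> 1")
  case True
  show ?thesis
  proof (intro exI[of _ "\<kappa>^2/32"] conjI exI[of _ "0::nat"] allI impI)
    show "\<kappa>^2/32 > 0" using assms by simp
    fix w :: nat and v u :: "real list"
    assume h: "length v = w" "length u = w" "set u \<subseteq> {-1, 1}" "l1_dist v u \<le> (1 - \<kappa>) * real w"
    show "measure_pmf.prob (Round v) {x. real (ham x u) \<le> 1/2 * (1 - \<kappa>/2) * real w} \<ge> 1 - exp (- (\<kappa>^2/32) * real w)"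
      using main_small[OF assms True, of u v] h by simp
  qed
next
  case False
  show ?thesis
  proof (intro exI[of _ "1::real"] conjI exI[of _ "1::nat"] allI impI)
    fix w :: nat and v u :: "real list"
    assume h: "1 \<le> w" "l1_dist v u \<le> (1 - \<kappa>) * real w"
    have "(1 - \<kappa>) * real w < 0" using False h(1) by (simp add: mult_neg_pos)
    then show "measure_pmf.prob (Round v) {x. real (ham x u) \<le> 1/2 * (1 - \<kappa>/2) * real w} \<ge> 1 - exp (- 1 * real w)"
      using h(2) l1_nonneg[of v u] by linarith
  qed simp
qed

end
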